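(* Let $A$ be a binary $n\times m$ matrix. Then $A$ has at most one binary base that is disjoint in rows.
   Context: A set $X$ of $\{0,1\}$-vectors spans a vector $y$ (binary sense) if $y=\sum_{x\in X}c_xx$ with $c_x\in\{0,1\}$ and ordinary addition. A binary base of $A$ is a set of $\{0,1\}$ column vectors of length $n$ spanning every column of $A$, of minimum cardinality among such spanning sets (this minimum equals the binary rank of $A$). A base is disjoint in rows if no two distinct vectors of the base have a $1$ in the same coordinate. *)

theory Defs
  imports "HOL-Analysis.Analysis"
begin

text \<open>An n x m matrix is A :: int^'m^'n (rows indexed by 'n, columns by 'm);
its columns are the vectors column j A :: int^'n.\<close>

definition binary_vec :: "int ^ 'n \<Rightarrow> bool" where
  "binary_vec v \<longleftrightarrow> (\<forall>i. v $ i \<in> {0, 1})"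

definition binary_matrix :: "int ^ 'm ^ 'n \<Rightarrow> bool" where
  "binary_matrix A \<longleftrightarrow> (\<forall>i j. A $ i $ j \<in> {0, 1})"

text \<open>X spans y in the binary sense: y is a 0/1-combination of X with ordinary addition.\<close>
definition binary_spans :: "(int ^ 'n) set \<Rightarrow> int ^ 'n \<Rightarrow> bool" where
  "binary_spans X y \<longleftrightarrow> (\<exists>c. (\<forall>x\<in>X. c x \<in> {0, 1}) \<and> y = (\<Sum>x\<in>X. c x *s x))"

definition spans_all_columns :: "(int ^ 'n) set \<Rightarrow> int ^ 'm ^ 'n \<Rightarrow> bool" where
  "spans_all_columns X A \<longleftrightarrow> finite X \<and> (\<forall>x\<in>X. binary_vec x) \<and> (\<forall>j. binary_spans X (column j A))"

definition binary_base :: "(int ^ 'n) set \<Rightarrow> int ^ 'm ^ 'n \<Rightarrow> bool" where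
  "binary_base B A \<longleftrightarrow> spans_all_columns B A \<and>
     (\<forall>B'. spans_all_columns B' A \<longrightarrow> card B \<le> card B')"

definition disjoint_in_rows :: "(int ^ 'n) set \<Rightarrow> bool" where
  "disjoint_in_rows B \<longleftrightarrow> (\<forall>x\<in>B. \<forall>y\<in>B. x \<noteq> y \<longrightarrow> (\<forall>i. \<not> (x $ i = 1 \<and> y $ i = 1)))"

end

theory Submission
  imports Defs
begin

definition ind :: "int ^ 'm ^ 'n \<Rightarrow> 'n \<Rightarrow> int ^ 'n" where
  "ind A i = (\<chi> k. if A $ k = A $ i then 1 else 0)"

lemma comp_sum: "(\<Sum>y\<in>B. f y *s y) $ i = (\<Sum>y\<in>B. f y * (y :: int^'n) $ i)"
  by (simp add: sum_component)

lemma base_char: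
  fixes A :: "int ^ 'm ^ 'n"
  assumes bb: "binary_base B A" and dj: "disjoint_in_rows B"
  shows "B = {ind A i | i. A $ i \<noteq> 0}"
proof -
  have fin: "finite B" and bin: "\<And>x. x \<in> B \<Longrightarrow> binary_vec x"
    and sp: "\<And>j. binary_spans B (column j A)"
    and minc: "\<And>B'. spans_all_columns B' A \<Longrightarrow> card B \<le> card B'"
    using bb unfolding binary_base_def spans_all_columns_def by auto
  have bin01: "\<And>x k. x \<in> B \<Longrightarrow> x $ k = 0 \<or> x $ k = 1"
    using bin unfolding binary_vec_def by auto
  have djo: "\<And>x y k. x \<in> B \<Longrightarrow> y \<in> B \<Longrightarrow> x \<noteq> y \<Longrightarrow> x $ k = 1 \<Longrightarrow> y $ k = 0"
    using dj bin01 unfolding disjoint_in_rows_def by blast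
  obtain c where c01: "\<And>j x. x \<in> B \<Longrightarrow> c j x \<in> {0, 1}"
    and ceq: "\<And>j. column j A = (\<Sum>x\<in>B. c j x *s x)"
    using sp unfolding binary_spans_def by metis
  have Aij: "\<And>i j. A $ i $ j = (\<Sum>y\<in>B. c j y * y $ i)"
  proof -
    fix i j
    have "A $ i $ j = column j A $ i" by (simp add: column_def)
    also have "\<dots> = (\<Sum>y\<in>B. c j y * y $ i)" by (simp add: ceq comp_sum)
    finally show "A $ i $ j = (\<Sum>y\<in>B. c j y * y $ i)" .
  qed
  have L1: "\<And>x i j. x \<in> B \<Longrightarrow> x $ i = 1 \<Longrightarrow> A $ i $ j = c j x"
  proof -
    fix x i j assume x: "x \<in> B" and xi: "x $ i = 1"
    have "(\<Sum>y\<in>B. c j y * y $ i) = c j x * x $ i + (\<Sum>y\<in>B-{x}. c j y * y $ i)"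
      using fin x by (simp add: sum.remove)
    also have "(\<Sum>y\<in>B-{x}. c j y * y $ i) = 0"
      by (rule sum.neutral) (use djo x xi in auto)
    finally show "A $ i $ j = c j x" using Aij xi by simp
  qed
  have L2: "\<And>i j. (\<forall>x\<in>B. x $ i = 0) \<Longrightarrow> A $ i $ j = 0"
    using Aij by simp
  have L3: "\<And>x. x \<in> B \<Longrightarrow> \<exists>i j. x $ i = 1 \<and> c j x = 1"
  proof (rule ccontr)
    fix x assume x: "x \<in> B" and no: "\<not> (\<exists>i j. x $ i = 1 \<and> c j x = 1)"
    have z: "\<And>j. c j x *s x = 0"
    proof -
      fix j show "c j x *s x = 0"
      proof (rule vec_eq_iff[THEN iffD2], rule allI)
        fix k
        show "(c j x *s x) $ k = 0 $ k"
          using no c01[OF x, of j] bin01[OF x, of k] by auto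
      qed
    qed
    have "spans_all_columns (B - {x}) A"
      unfolding spans_all_columns_def
    proof (intro conjI allI ballI)
      show "finite (B - {x})" using fin by simp
      show "\<And>y. y \<in> B - {x} \<Longrightarrow> binary_vec y" using bin by simp
      fix j
      have "column j A = c j x *s x + (\<Sum>y\<in>B-{x}. c j y *s y)"
        using fin x ceq by (simp add: sum.remove)
      then have "column j A = (\<Sum>y\<in>B-{x}. c j y *s y)" using z by simp
      then show "binary_spans (B - {x}) (column j A)"
        unfolding binary_spans_def using c01 by blast
    qed
    from minc[OF this] have "card B \<le> card (B - {x})" .
    moreover have "card (B - {x}) < card B" using fin x by (meson card_Diff1_less)
    ultimately show False by simp
  qed
  have L4: "\<And>x y i i'. x \<in> B \<Longrightarrow> y \<in> B \<Longrightarrow> x \<noteq> y \<Longrightarrow> x $ i = 1 \<Longrightarrow> y $ i' = 1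
      \<Longrightarrow> A $ i \<noteq> A $ i'"
  proof
    fix x y i i' assume x: "x \<in> B" and y: "y \<in> B" and xy: "x \<noteq> y"
      and xi: "x $ i = 1" and yi: "y $ i' = 1" and eq: "A $ i = A $ i'"
    have cxy: "\<And>j. c j x = c j y" using L1[OF x xi] L1[OF y yi] eq by metis
    define B' where "B' = insert (x + y) (B - {x, y})"
    have notin: "x + y \<notin> B - {x, y}"
    proof
      assume a: "x + y \<in> B - {x, y}"
      have "y $ i = 0" using djo[OF x y xy xi] .
      then have "(x + y) $ i = 1" using xi by simp
      moreover have "x + y \<in> B" "x + y \<noteq> x" using a by auto
      ultimately have "x $ i = 0" using djo[of "x+y" x i] x by blast
      then show False using xi by simp
    qed
    have "spans_all_columns B' A"
      unfolding spans_all_columns_def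
    proof (intro conjI allI ballI)
      show "finite B'" using fin by (simp add: B'_def)
      fix z assume "z \<in> B'"
      then show "binary_vec z"
      proof (cases "z = x + y")
        case True
        show ?thesis unfolding binary_vec_def True
        proof
          fix k
          show "(x + y) $ k \<in> {0, 1}"
            using bin01[OF x, of k] bin01[OF y, of k] djo[OF x y xy, of k] by auto
        qed
      next
        case False
        then show ?thesis using \<open>z \<in> B'\<close> bin by (auto simp: B'_def)
      qed
    next
      fix j
      define c' where "c' z = (if z = x + y then c j x else c j z)" for z
      have "(\<Sum>z\<in>B'. c' z *s z) = c' (x+y) *s (x + y) + (\<Sum>z\<in>B - {x, y}. c' z *s z)"
        unfolding B'_def using fin notin by simp
      also have "(\<Sum>z\<in>B - {x, y}. c' z *s z) = (\<Sum>z\<in>B - {x, y}. c j z *s z)"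
        by (rule sum.cong) (use notin in \<open>auto simp: c'_def\<close>)
      also have "c' (x+y) *s (x + y) = c j x *s x + c j y *s y"
        using cxy by (simp add: c'_def vector_ssub_ldistrib scalar_mult_eq_scaleR algebra_simps)
      finally have s1: "(\<Sum>z\<in>B'. c' z *s z) = c j x *s x + c j y *s y + (\<Sum>z\<in>B - {x, y}. c j z *s z)" .
      have "(\<Sum>z\<in>B-{x}. c j z *s z) = c j y *s y + (\<Sum>z\<in>B-{x}-{y}. c j z *s z)"
        using fin y xy by (intro sum.remove) auto
      moreover have "B - {x} - {y} = B - {x, y}" by auto
      moreover have "(\<Sum>z\<in>B. c j z *s z) = c j x *s x + (\<Sum>z\<in>B-{x}. c j z *s z)"
        using fin x by (simp add: sum.remove)
      ultimately have "column j A = (\<Sum>z\<in>B'. c' z *s z)"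
        using s1 ceq by (simp add: add.assoc)
      moreover have "\<forall>z\<in>B'. c' z \<in> {0, 1}"
        using c01 x by (auto simp: B'_def c'_def)
      ultimately show "binary_spans B' (column j A)"
        unfolding binary_spans_def by blast
    qed
    from minc[OF this] have "card B \<le> card B'" .
    moreover have "card B' = card B - 1"
    proof -
      have "card B' = card (B - {x, y}) + 1" unfolding B'_def using fin notin by simp
      moreover have "card (B - {x, y}) = card B - 2" using fin x y xy by (simp add: card_Diff_subset)
      moreover have "card B \<ge> 2"
      proof -
        have "{x, y} \<subseteq> B" using x y by auto
        then have "card {x, y} \<le> card B" using fin by (rule card_mono[rotated])
        then show ?thesis using xy by simp
      qed
      ultimately show ?thesis by simp
    qed
    moreover have "card B \<ge> 1" using fin x by (metis One_nat_def Suc_leI card_gt_0_iff empty_iff)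
    ultimately show False by simp
  qed
  have charx: "\<And>x i. x \<in> B \<Longrightarrow> x $ i = 1 \<Longrightarrow> x = ind A i"
  proof -
    fix x i0 assume x: "x \<in> B" and xi0: "x $ i0 = 1"
    obtain i j where xi: "x $ i = 1" and cj: "c j x = 1" using L3[OF x] by blast
    have nz: "A $ i0 $ j = 1" using L1[OF x xi0] cj by simp
    show "x = ind A i0" unfolding ind_def
    proof (rule vec_eq_iff[THEN iffD2], rule allI)
      fix k
      show "x $ k = (\<chi> k. if A $ k = A $ i0 then 1 else 0) $ k"
      proof (cases "x $ k = 1")
        case True
        have "A $ k = A $ i0"
          using L1[OF x True] L1[OF x xi0] by (simp add: vec_eq_iff)
        then show ?thesis using True by simp
      next
        case False
        then have xk: "x $ k = 0" using bin01[OF x] by blast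
        have "A $ k \<noteq> A $ i0"
        proof (cases "\<exists>y\<in>B. y $ k = 1")
          case True
          then obtain y where y: "y \<in> B" "y $ k = 1" by blast
          then have "y \<noteq> x" using xk by auto
          then show ?thesis using L4[OF y(1) x _ y(2) xi0] by auto
        next
          case False
          then have "\<forall>y\<in>B. y $ k = 0" using bin01 by blast
          then have "A $ k $ j = 0" using L2 by blast
          then show ?thesis using nz by auto
        qed
        then show ?thesis using xk by simp
      qed
    qed
  qed
  show ?thesis
  proof (intro set_eqI iffI)
    fix x assume x: "x \<in> B"
    obtain i j where xi: "x $ i = 1" and cj: "c j x = 1" using L3[OF x] by blast
    have "A $ i \<noteq> 0" using L1[OF x xi, of j] cj by (metis zero_index one_neq_zero)
    then show "x \<in> {ind A i | i. A $ i \<noteq> 0}" using charx[OF x xi] by blast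
  next
    fix z assume "z \<in> {ind A i | i. A $ i \<noteq> 0}"
    then obtain i where z: "z = ind A i" and nz: "A $ i \<noteq> 0" by blast
    have "\<exists>x\<in>B. x $ i = 1"
    proof (rule ccontr)
      assume "\<not> (\<exists>x\<in>B. x $ i = 1)"
      then have "\<forall>x\<in>B. x $ i = 0" using bin01 by blast
      then have "A $ i = 0" using L2 by (simp add: vec_eq_iff)
      then show False using nz by simp
    qed
    then obtain x where "x \<in> B" "x $ i = 1" by blast
    then show "z \<in> B" using charx z by metis
  qed
qed

theorem mainTheorem11:
  fixes A :: "int ^ 'm ^ 'n"
  assumes "binary_matrix A"
  shows "\<forall>B1 B2. binary_base B1 A \<and> disjoint_in_rows B1 \<and>
                 binary_base B2 A \<and> disjoint_in_rows B2 \<longrightarrow> B1 = B2"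
  using base_char by blast

end
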